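(* For all positive integers $\alpha$ and $k$, the graph $G^{\alpha+1}_{3k+3\alpha-1}$ satisfies $\mathrm{ecrw}_\alpha(G^{\alpha+1}_{3k+3\alpha-1})\ge k+1$.
   Context: For positive integers $n,k$, the graph $G^n_k$ is defined as follows: let $A=\{a_1,\dots,a_n\}$, let $B$ be the set of 2-element subsets of $A$, and let $B_k=\{(W,\ell):W\in B,\ \ell\in[k]\}$. Then $V(G^n_k)=A\cup B_k$, and $a\in A$ is adjacent to $(W,\ell)\in B_k$ iff $a\in W$; there are no other edges. A tree-cut decomposition of a graph $G$ is a pair $\mathcal{T}=(T,\{X_t\}_{t\in V(T)})$ where $T$ is a tree and the bags $X_t\subseteq V(G)$ are pairwise disjoint (possibly empty) with $\bigcup_{t\in V(T)}X_t=V(G)$. For a node $t$ of $T$, let $T_1,\dots,T_m$ be the connected components of $T-t$ and $Z_i=\bigcup_{s\in V(T_i)}X_s$; $\mathrm{cross}_{\mathcal{T}}(t)$ is the number of edges of $G$ whose two endpoints lie in two distinct sets among $Z_1,\dots,Z_m$ (if $T$ has one node, $\mathrm{cross}_{\mathcal T}(t)=0$). The crossing number of $\mathcal{T}$ is $\max_{t}\mathrm{cross}_{\mathcal{T}}(t)$, and the thickness of $\mathcal{T}$ is $\max_t|X_t|$. $\mathrm{ecrw}_\alpha(G)$ is the minimum crossing number over tree-cut decompositions of $G$ of thickness at most $\alpha$. *)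

theory Defs
  imports Main
begin

definition reach_in :: "'n set \<Rightarrow> 'n set set \<Rightarrow> 'n \<Rightarrow> 'n \<Rightarrow> bool" where
  "reach_in S E u v \<longleftrightarrow> u \<in> S \<and> (\<lambda>x y. x \<in> S \<and> y \<in> S \<and> {x, y} \<in> E)\<^sup>*\<^sup>* u v"

definition has_cycle :: "'n set set \<Rightarrow> bool" where
  "has_cycle E \<longleftrightarrow> (\<exists>xs. length xs \<ge> 3 \<and> distinct xs \<and>
      (\<forall>i < length xs. {xs ! i, xs ! ((i + 1) mod length xs)} \<in> E))"

definition is_tree :: "'n set \<Rightarrow> 'n set set \<Rightarrow> bool" where
  "is_tree N E \<longleftrightarrow> finite N \<and> N \<noteq> {} \<and>
     (\<forall>e\<in>E. \<exists>u v. e = {u, v} \<and> u \<noteq> v \<and> u \<in> N \<and> v \<in> N) \<and>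
     (\<forall>u\<in>N. \<forall>v\<in>N. reach_in N E u v) \<and> \<not> has_cycle E"

text \<open>(N, ET) is the tree T, X t the bag of node t; V, EG the graph G.\<close>
definition tree_cut_decomp ::
  "'v set \<Rightarrow> 'v set set \<Rightarrow> 'n set \<Rightarrow> 'n set set \<Rightarrow> ('n \<Rightarrow> 'v set) \<Rightarrow> bool" where
  "tree_cut_decomp V EG N ET X \<longleftrightarrow> is_tree N ET \<and>
     (\<forall>s\<in>N. \<forall>t\<in>N. s \<noteq> t \<longrightarrow> X s \<inter> X t = {}) \<and>
     (\<Union>t\<in>N. X t) = V"

definition cross_at ::
  "'v set set \<Rightarrow> 'n set \<Rightarrow> 'n set set \<Rightarrow> ('n \<Rightarrow> 'v set) \<Rightarrow> 'n \<Rightarrow> nat" where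
  "cross_at EG N ET X t = card {e \<in> EG. \<exists>u v s s'. e = {u, v} \<and>
      s \<in> N - {t} \<and> s' \<in> N - {t} \<and> u \<in> X s \<and> v \<in> X s' \<and>
      \<not> reach_in (N - {t}) ET s s'}"

definition crossing_number ::
  "'v set set \<Rightarrow> 'n set \<Rightarrow> 'n set set \<Rightarrow> ('n \<Rightarrow> 'v set) \<Rightarrow> nat" where
  "crossing_number EG N ET X = Max ((\<lambda>t. cross_at EG N ET X t) ` N)"

definition thickness :: "'n set \<Rightarrow> ('n \<Rightarrow> 'v set) \<Rightarrow> nat" where
  "thickness N X = Max ((\<lambda>t. card (X t)) ` N)"

text \<open>ecrw_alpha(G): minimum crossing number over tree-cut decompositions of thickness
  at most alpha (tree nodes taken w.l.o.g. from nat).\<close>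
definition ecrw :: "nat \<Rightarrow> 'v set \<Rightarrow> 'v set set \<Rightarrow> nat" where
  "ecrw \<alpha> V EG = Inf {crossing_number EG N ET X | (N :: nat set) ET X.
       tree_cut_decomp V EG N ET X \<and> thickness N X \<le> \<alpha>}"

text \<open>A = {a_1..a_n} is Inl ` {1..n}; B_k consists of Inr (W, l) with W a 2-subset
  of {1..n} and l in {1..k}.\<close>
definition Gk_vertices :: "nat \<Rightarrow> nat \<Rightarrow> (nat + (nat set \<times> nat)) set" where
  "Gk_vertices n k = Inl ` {1..n} \<union>
     Inr ` {(W, l). W \<subseteq> {1..n} \<and> card W = 2 \<and> l \<in> {1..k}}"

definition Gk_edges :: "nat \<Rightarrow> nat \<Rightarrow> (nat + (nat set \<times> nat)) set set" where
  "Gk_edges n k = {{Inl a, Inr (W, l)} | a W l.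
     a \<in> {1..n} \<and> W \<subseteq> {1..n} \<and> card W = 2 \<and> l \<in> {1..k} \<and> a \<in> W}"

end

theory Submission
  imports Defs "HOL-Library.Transitive_Closure_Table"
begin

lemma path_nth:
  assumes "rtrancl_path r x ys y"
  shows "(\<forall>i<length ys. r ((x#ys)!i) (ys!i)) \<and> last (x#ys) = y"
  using assms
proof induct
  case (base x) then show ?case by simp
next
  case (step x y ys z)
  show ?case
  proof (intro conjI allI impI)
    fix i assume "i < length (y#ys)"
    then show "r ((x # y # ys) ! i) ((y # ys) ! i)"
      using step by (cases i) auto
  next
    show "last (x # y # ys) = z" using step by simp
  qed
qed

lemma cyc:
  assumes R: "(\<lambda>x y. x\<in>S \<and> y\<in>S \<and> {x,y}\<in>E)\<^sup>*\<^sup>* a b"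
    and ab: "a \<noteq> b" and c: "c \<notin> S" and ca: "{c,a} \<in> E" and cb: "{c,b} \<in> E" and a: "a \<in> S"
  shows "has_cycle E"
proof -
  let ?r = "(\<lambda>x y. x\<in>S \<and> y\<in>S \<and> {x,y}\<in>E)"
  have "\<exists>ys0. rtrancl_path ?r a ys0 b" using R by (simp only: rtranclp_eq_rtrancl_path)
  then obtain ys0 where p0: "rtrancl_path ?r a ys0 b" by blast
  obtain ys where p: "rtrancl_path ?r a ys b" and d: "distinct (a # ys)"
    using rtrancl_path_distinct[OF p0] by blast
  have pn: "\<forall>i<length ys. ?r ((a#ys)!i) (ys!i)" and la: "last (a#ys) = b"
    using path_nth[OF p] by auto
  have ne: "ys \<noteq> []" using la ab by auto
  have inS: "set ys \<subseteq> S"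
  proof
    fix z assume "z \<in> set ys"
    then obtain i where "i < length ys" "ys!i = z" by (auto simp: in_set_conv_nth)
    then show "z \<in> S" using pn by auto
  qed
  define zs where "zs = c # a # ys"
  have len: "length zs = length ys + 2" by (simp add: zs_def)
  have "distinct zs" using d c a inS by (auto simp: zs_def)
  moreover have "length zs \<ge> 3" using ne len by (cases ys) auto
  moreover have "\<forall>i<length zs. {zs ! i, zs ! ((i + 1) mod length zs)} \<in> E"
  proof (intro allI impI)
    fix i assume i: "i < length zs"
    consider "i = 0" | "i \<ge> 1 \<and> i \<le> length ys" | "i = length ys + 1" using i len by linarith
    then show "{zs ! i, zs ! ((i + 1) mod length zs)} \<in> E"
    proof cases
      case 1 then show ?thesis using ca len by (simp add: zs_def)
    next
      case 2
      then have m: "(i+1) mod length zs = i + 1" using len by simp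
      obtain j where j: "i = Suc j" using 2 by (cases i) auto
      have "j < length ys" using 2 j by simp
      then have "?r ((a#ys)!j) (ys!j)" using pn by auto
      then show ?thesis using m j by (simp add: zs_def)
    next
      case 3
      then have m: "(i+1) mod length zs = 0" using len by simp
      have "zs ! i = last (a#ys)" using 3 ne by (simp add: zs_def last_conv_nth)
      then show ?thesis using m la cb by (simp add: zs_def insert_commute)
    qed
  qed
  ultimately show ?thesis unfolding has_cycle_def by blast
qed


lemma reach_refl: "u \<in> S \<Longrightarrow> reach_in S E u u"
  by (simp add: reach_in_def)

lemma reach_mem: "reach_in S E u v \<Longrightarrow> v \<in> S"
proof -
  assume h: "reach_in S E u v"
  have "(\<lambda>x y. x \<in> S \<and> y \<in> S \<and> {x, y} \<in> E)\<^sup>*\<^sup>* u v" "u \<in> S" using h by (auto simp: reach_in_def)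
  then show "v \<in> S" by (induct rule: rtranclp_induct) auto
qed

lemma reach_sym: "reach_in S E u v \<Longrightarrow> reach_in S E v u"
proof -
  assume h: "reach_in S E u v"
  let ?r = "\<lambda>x y. x \<in> S \<and> y \<in> S \<and> {x, y} \<in> E"
  have "?r\<^sup>*\<^sup>* u v" using h by (auto simp: reach_in_def)
  then have "?r\<^sup>*\<^sup>* v u"
  proof (induct rule: rtranclp_induct)
    case base then show ?case by simp
  next
    case (step y z)
    then have "?r z y" by (simp add: insert_commute)
    then show ?case using step(3) by (rule converse_rtranclp_into_rtranclp)
  qed
  then show ?thesis using reach_mem[OF h] by (simp add: reach_in_def)
qed

lemma reach_trans: "reach_in S E u v \<Longrightarrow> reach_in S E v w \<Longrightarrow> reach_in S E u w"
  unfolding reach_in_def by (blast intro: rtranclp_trans)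

lemma reach_step:
  assumes h: "reach_in S E u v" and w: "w \<in> S" and e: "{v,w} \<in> E"
  shows "reach_in S E u w"
proof -
  have v: "v \<in> S" using reach_mem[OF h] .
  have u: "u \<in> S" and r: "(\<lambda>x y. x \<in> S \<and> y \<in> S \<and> {x, y} \<in> E)\<^sup>*\<^sup>* u v"
    using h by (simp_all add: reach_in_def)
  have "(\<lambda>x y. x \<in> S \<and> y \<in> S \<and> {x, y} \<in> E)\<^sup>*\<^sup>* u w"
    by (rule rtranclp.rtrancl_into_rtrancl[OF r]) (simp add: v w e)
  then show ?thesis using u by (simp add: reach_in_def)
qed

lemma F1:
  assumes "reach_in N E t c" "c \<noteq> t"
  shows "\<exists>t'. {t,t'} \<in> E \<and> t' \<in> N - {t} \<and> reach_in (N - {t}) E t' c"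
proof -
  let ?r = "\<lambda>x y. x \<in> N \<and> y \<in> N \<and> {x, y} \<in> E"
  have "?r\<^sup>*\<^sup>* t c" using assms by (auto simp: reach_in_def)
  then show ?thesis using assms(2)
  proof (induct rule: rtranclp_induct)
    case base then show ?case by simp
  next
    case (step b c)
    show ?case
    proof (cases "b = t")
      case True
      then show ?thesis using step by (auto intro: reach_refl)
    next
      case False
      then obtain t' where t': "{t,t'} \<in> E" "t' \<in> N - {t}" "reach_in (N - {t}) E t' b"
        using step by blast
      have "reach_in (N - {t}) E t' c" using reach_step[OF t'(3), of c] step by auto
      then show ?thesis using t' by blast
    qed
  qed
qed

lemma F2:
  assumes tree: "\<not> has_cycle E" and e: "{t,t'} \<in> E" and tt: "t \<noteq> t'" and tN: "t \<in> N" and t'N: "t' \<in> N"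
    and r1: "reach_in (N - {t'}) E t s" and r2: "reach_in (N - {t}) E t' s"
  shows False
proof -
  let ?r = "\<lambda>x y. x \<in> N - {t'} \<and> y \<in> N - {t'} \<and> {x, y} \<in> E"
  have "?r\<^sup>*\<^sup>* t s" using r1 by (auto simp: reach_in_def)
  then have "\<not> reach_in (N - {t}) E t' s"
  proof (induct rule: rtranclp_induct)
    case base then show ?case using reach_mem[of "N - {t}" E t' t] by auto
  next
    case (step x y)
    show ?case
    proof
      assume ry: "reach_in (N - {t}) E t' y"
      show False
      proof (cases "x = t")
        case False
        then have "reach_in (N - {t}) E t' x" using reach_step[OF ry, of x] step(2)
          by (auto simp: insert_commute)
        then show False using step(3) by blast
      next
        case True
        have "y \<noteq> t'" using step(2) by auto
        have "(\<lambda>x y. x\<in>N-{t} \<and> y\<in>N-{t} \<and> {x,y}\<in>E)\<^sup>*\<^sup>* t' y" using ry by (simp add: reach_in_def)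
        then have "has_cycle E"
          using cyc[of "N-{t}" E t' y t] \<open>y \<noteq> t'\<close> e step(2) True tt t'N by auto
        then show False using tree by blast
      qed
    qed
  qed
  then show False using r2 by blast
qed


definition crset :: "'v set set \<Rightarrow> 'n set \<Rightarrow> 'n set set \<Rightarrow> ('n \<Rightarrow> 'v set) \<Rightarrow> 'n \<Rightarrow> 'v set set" where
  "crset EG N ET X t = {e \<in> EG. \<exists>u v s s'. e = {u, v} \<and>
      s \<in> N - {t} \<and> s' \<in> N - {t} \<and> u \<in> X s \<and> v \<in> X s' \<and>
      \<not> reach_in (N - {t}) ET s s'}"

lemma cross_eq: "cross_at EG N ET X t = card (crset EG N ET X t)"
  unfolding cross_at_def crset_def by simp

lemma finite_V: "finite (Gk_vertices n K)"
proof -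
  have f: "finite (Pow {1..n} \<times> {1..K})" by simp
  have "{(W, l). W \<subseteq> {1..n} \<and> card W = 2 \<and> l \<in> {1..K}} \<subseteq> Pow {1..n} \<times> {1..K}"
    by auto
  then have "finite {(W, l). W \<subseteq> {1..n} \<and> card W = 2 \<and> l \<in> {1..K}}"
    by (rule finite_subset[OF _ f])
  then show ?thesis unfolding Gk_vertices_def by simp
qed

lemma edges_sub: "Gk_edges n K \<subseteq> Pow (Gk_vertices n K)"
  unfolding Gk_edges_def Gk_vertices_def by auto

lemma finite_E: "finite (Gk_edges n K)"
  by (rule finite_subset[OF edges_sub]) (simp add: finite_V)

lemma edge_in_cross:
  assumes "a \<in> {1..n}" "W \<subseteq> {1..n}" "card W = 2" "l \<in> {1..K}" "a \<in> W"
    "s \<in> N - {t}" "s' \<in> N - {t}" "Inl a \<in> X s" "Inr (W,l) \<in> X s'" "\<not> reach_in (N - {t}) ET s s'"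
  shows "{Inl a, Inr (W,l)} \<in> crset (Gk_edges n K) N ET X t"
proof -
  have "{Inl a, Inr (W,l)} \<in> Gk_edges n K" unfolding Gk_edges_def using assms by blast
  then show ?thesis unfolding crset_def using assms by blast
qed

lemma inj_edges: "inj_on (\<lambda>l. {Inl (g l), Inr (W,l)}) L"
  by (rule inj_onI) (auto simp: doubleton_eq_iff)

lemma card_le_cross:
  assumes "inj_on f L" "f ` L \<subseteq> crset (Gk_edges n K) N ET X t"
  shows "card L \<le> cross_at (Gk_edges n K) N ET X t"
  unfolding cross_eq
  by (rule card_inj_on_le[OF assms]) (rule finite_subset[OF _ finite_E[of n K]], auto simp: crset_def)

lemma labels_in_bag:
  assumes "finite B" "card B \<le> \<alpha>"
  shows "card {l \<in> {1..K}. Inr (W,l) \<in> B} \<le> \<alpha>"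
proof -
  have "card {l \<in> {1..K}. Inr (W,l) \<in> B} \<le> card B"
    by (rule card_inj_on_le[of "\<lambda>l. Inr (W,l)"]) (auto intro: inj_onI assms)
  then show ?thesis using assms by linarith
qed


lemma dec_facts:
  assumes dec: "tree_cut_decomp (Gk_vertices n K) (Gk_edges n K) N ET X"
  shows "\<And>v. v \<in> Gk_vertices n K \<Longrightarrow> \<exists>s\<in>N. v \<in> X s"
    and "\<And>s. s \<in> N \<Longrightarrow> finite (X s)"
    and "\<And>s s' v. s \<in> N \<Longrightarrow> s' \<in> N \<Longrightarrow> v \<in> X s \<Longrightarrow> v \<in> X s' \<Longrightarrow> s = s'"
proof -
  have U: "(\<Union>t\<in>N. X t) = Gk_vertices n K" and D: "\<forall>s\<in>N. \<forall>t\<in>N. s \<noteq> t \<longrightarrow> X s \<inter> X t = {}"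
    using dec by (auto simp: tree_cut_decomp_def)
  show "\<And>v. v \<in> Gk_vertices n K \<Longrightarrow> \<exists>s\<in>N. v \<in> X s" using U by blast
  show "\<And>s. s \<in> N \<Longrightarrow> finite (X s)"
  proof -
    fix s assume "s \<in> N"
    then have "X s \<subseteq> Gk_vertices n K" using U by blast
    then show "finite (X s)" by (rule finite_subset) (rule finite_V)
  qed
  show "\<And>s s' v. s \<in> N \<Longrightarrow> s' \<in> N \<Longrightarrow> v \<in> X s \<Longrightarrow> v \<in> X s' \<Longrightarrow> s = s'" using D by blast
qed

lemma Inr_V: "W \<subseteq> {1..n} \<Longrightarrow> card W = 2 \<Longrightarrow> l \<in> {1..K} \<Longrightarrow> Inr (W,l) \<in> Gk_vertices n K"
  unfolding Gk_vertices_def by auto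

lemma case1:
  assumes dec: "tree_cut_decomp (Gk_vertices n K) (Gk_edges n K) N ET X"
    and thick: "\<forall>t\<in>N. card (X t) \<le> \<alpha>"
    and tN: "t \<in> N" and ab: "a \<in> {1..n}" "b \<in> {1..n}"
    and sab: "sa \<in> N - {t}" "sb \<in> N - {t}" "Inl a \<in> X sa" "Inl b \<in> X sb"
    and nr: "\<not> reach_in (N - {t}) ET sa sb"
  shows "K - \<alpha> \<le> cross_at (Gk_edges n K) N ET X t"
proof -
  note df = dec_facts[OF dec]
  have "a \<noteq> b"
  proof
    assume "a = b"
    then have "sa = sb" using df(3) sab by auto
    then show False using nr reach_refl[of sa "N - {t}" ET] sab(1) by simp
  qed
  define W where "W = {a,b}"
  have W: "W \<subseteq> {1..n}" "card W = 2" "a \<in> W" "b \<in> W" using ab \<open>a\<noteq>b\<close> by (auto simp: W_def)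
  define L where "L = {l \<in> {1..K}. Inr (W,l) \<notin> X t}"
  define M where "M = {l \<in> {1..K}. Inr (W,l) \<in> X t}"
  have "card M \<le> \<alpha>" unfolding M_def by (rule labels_in_bag[OF df(2)[OF tN]]) (use thick tN in auto)
  moreover have "card {1..K} \<le> card L + card M"
  proof -
    have "{1..K} = L \<union> M" by (auto simp: L_def M_def)
    then show ?thesis using card_Un_le[of L M] by simp
  qed
  ultimately have cL: "K - \<alpha> \<le> card L" by simp
  define loc where "loc l = (SOME s. s \<in> N \<and> Inr (W,l) \<in> X s)" for l
  have loc: "\<And>l. l \<in> {1..K} \<Longrightarrow> loc l \<in> N \<and> Inr (W,l) \<in> X (loc l)"
  proof -
    fix l assume "l \<in> {1..K}"
    then have "\<exists>s. s \<in> N \<and> Inr (W,l) \<in> X s" using df(1)[OF Inr_V[OF W(1,2)]] by blast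
    then show "loc l \<in> N \<and> Inr (W,l) \<in> X (loc l)" unfolding loc_def by (rule someI_ex)
  qed
  define g where "g l = (if reach_in (N - {t}) ET sa (loc l) then b else a)" for l
  have "card L \<le> cross_at (Gk_edges n K) N ET X t"
  proof (rule card_le_cross[OF inj_edges[of g W L]], rule subsetI)
    fix e assume "e \<in> (\<lambda>l. {Inl (g l), Inr (W, l)}) ` L"
    then obtain l where l: "l \<in> L" and e: "e = {Inl (g l), Inr (W, l)}" by auto
    have lK: "l \<in> {1..K}" and nt: "Inr (W,l) \<notin> X t" using l by (auto simp: L_def)
    have ln: "loc l \<in> N - {t}" using loc[OF lK] nt by auto
    show "e \<in> crset (Gk_edges n K) N ET X t"
    proof (cases "reach_in (N - {t}) ET sa (loc l)")
      case True
      have "\<not> reach_in (N - {t}) ET sb (loc l)"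
        using True nr reach_sym[of "N-{t}" ET sb "loc l"] reach_trans[of "N-{t}" ET sa "loc l" sb] by blast
      then show ?thesis unfolding e g_def using True
        by (simp add: edge_in_cross[where X=X and N=N and t=t and ET=ET, OF ab(2) W(1,2) lK W(4) sab(2) ln sab(4)] loc[OF lK])
    next
      case False
      then show ?thesis unfolding e g_def
        by (simp add: edge_in_cross[where X=X and N=N and t=t and ET=ET, OF ab(1) W(1,2) lK W(3) sab(1) ln sab(3)] loc[OF lK])
    qed
  qed
  then show ?thesis using cL by linarith
qed

lemma case2:
  assumes dec: "tree_cut_decomp (Gk_vertices n K) (Gk_edges n K) N ET X"
    and thick: "\<forall>t\<in>N. card (X t) \<le> \<alpha>"
    and e: "{t,t'} \<in> ET" and tt: "t \<noteq> t'" and tN: "t \<in> N" "t' \<in> N"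
    and pq: "p \<in> {1..n}" "q \<in> {1..n}" "Inl p \<in> X t" "Inl q \<in> X t'"
  shows "K - 2 * \<alpha> \<le> cross_at (Gk_edges n K) N ET X t + cross_at (Gk_edges n K) N ET X t'"
proof -
  note df = dec_facts[OF dec]
  have tree: "\<not> has_cycle ET" using dec by (simp add: tree_cut_decomp_def is_tree_def)
  have "p \<noteq> q"
  proof
    assume "p = q"
    then show False using df(3)[OF tN pq(3)] pq(4) tt by simp
  qed
  define W where "W = {p,q}"
  have W: "W \<subseteq> {1..n}" "card W = 2" "p \<in> W" "q \<in> W" using pq \<open>p\<noteq>q\<close> by (auto simp: W_def)
  define L where "L = {l \<in> {1..K}. Inr (W,l) \<notin> X t \<and> Inr (W,l) \<notin> X t'}"
  define M1 where "M1 = {l \<in> {1..K}. Inr (W,l) \<in> X t}"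
  define M2 where "M2 = {l \<in> {1..K}. Inr (W,l) \<in> X t'}"
  have "card M1 \<le> \<alpha>" unfolding M1_def by (rule labels_in_bag[OF df(2)[OF tN(1)]]) (use thick tN in auto)
  moreover have "card M2 \<le> \<alpha>" unfolding M2_def by (rule labels_in_bag[OF df(2)[OF tN(2)]]) (use thick tN in auto)
  moreover have "card {1..K} \<le> card L + card M1 + card M2"
  proof -
    have "{1..K} = L \<union> M1 \<union> M2" by (auto simp: L_def M1_def M2_def)
    then have "card {1..K} = card (L \<union> M1 \<union> M2)" by simp
    then show ?thesis using card_Un_le[of "L \<union> M1" M2] card_Un_le[of L M1] by linarith
  qed
  ultimately have cL: "K - 2 * \<alpha> \<le> card L" by simp
  define loc where "loc l = (SOME s. s \<in> N \<and> Inr (W,l) \<in> X s)" for l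
  have loc: "\<And>l. l \<in> {1..K} \<Longrightarrow> loc l \<in> N \<and> Inr (W,l) \<in> X (loc l)"
  proof -
    fix l assume "l \<in> {1..K}"
    then have "\<exists>s. s \<in> N \<and> Inr (W,l) \<in> X s" using df(1)[OF Inr_V[OF W(1,2)]] by blast
    then show "loc l \<in> N \<and> Inr (W,l) \<in> X (loc l)" unfolding loc_def by (rule someI_ex)
  qed
  define L1 where "L1 = {l \<in> L. \<not> reach_in (N - {t}) ET t' (loc l)}"
  define L2 where "L2 = {l \<in> L. \<not> reach_in (N - {t'}) ET t (loc l)}"
  have "L \<subseteq> L1 \<union> L2"
  proof
    fix l assume l: "l \<in> L"
    show "l \<in> L1 \<union> L2"
    proof (rule ccontr)
      assume "l \<notin> L1 \<union> L2"
      then have "reach_in (N - {t}) ET t' (loc l)" "reach_in (N - {t'}) ET t (loc l)"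
        using l by (auto simp: L1_def L2_def)
      then show False using F2[OF tree e tt tN] by blast
    qed
  qed
  moreover have "finite (L1 \<union> L2)"
    by (rule finite_subset[of _ "{1..K}"]) (auto simp: L1_def L2_def L_def)
  ultimately have "card L \<le> card (L1 \<union> L2)" by (rule card_mono[rotated])
  then have "card L \<le> card L1 + card L2" using card_Un_le[of L1 L2] by linarith
  moreover have "card L1 \<le> cross_at (Gk_edges n K) N ET X t"
  proof (rule card_le_cross[OF inj_edges[of "\<lambda>_. q" W L1]], rule subsetI)
    fix e assume "e \<in> (\<lambda>l. {Inl q, Inr (W, l)}) ` L1"
    then obtain l where l: "l \<in> L1" and e: "e = {Inl q, Inr (W, l)}" by auto
    have lK: "l \<in> {1..K}" and nt: "Inr (W,l) \<notin> X t" and nr: "\<not> reach_in (N - {t}) ET t' (loc l)"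
      using l by (auto simp: L1_def L_def)
    have ln: "loc l \<in> N - {t}" using loc[OF lK] nt by auto
    show "e \<in> crset (Gk_edges n K) N ET X t" unfolding e
      using edge_in_cross[where X=X and N=N and t=t and ET=ET, OF pq(2) W(1,2) lK W(4) _ ln pq(4) _ nr] tN tt loc[OF lK] by auto
  qed
  moreover have "card L2 \<le> cross_at (Gk_edges n K) N ET X t'"
  proof (rule card_le_cross[OF inj_edges[of "\<lambda>_. p" W L2]], rule subsetI)
    fix e assume "e \<in> (\<lambda>l. {Inl p, Inr (W, l)}) ` L2"
    then obtain l where l: "l \<in> L2" and e: "e = {Inl p, Inr (W, l)}" by auto
    have lK: "l \<in> {1..K}" and nt: "Inr (W,l) \<notin> X t'" and nr: "\<not> reach_in (N - {t'}) ET t (loc l)"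
      using l by (auto simp: L2_def L_def)
    have ln: "loc l \<in> N - {t'}" using loc[OF lK] nt by auto
    show "e \<in> crset (Gk_edges n K) N ET X t'" unfolding e
      using edge_in_cross[where X=X and N=N and t=t' and ET=ET, OF pq(1) W(1,2) lK W(3) _ ln pq(3) _ nr] tN tt loc[OF lK] by auto
  qed
  ultimately show ?thesis using cL by linarith
qed


lemma star_tree:
  assumes m: "m \<ge> 1"
  shows "is_tree {0..<m} {{0,i} | i. 0 < i \<and> i < (m::nat)}"
proof -
  let ?N = "{0..<m}" and ?E = "{{0,i} | i. 0 < i \<and> i < (m::nat)}"
  have c0: "\<And>u. u \<in> ?N \<Longrightarrow> reach_in ?N ?E u 0"
  proof -
    fix u assume u: "u \<in> ?N"
    show "reach_in ?N ?E u 0"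
    proof (cases "u = 0")
      case True then show ?thesis using reach_refl[OF u] by simp
    next
      case False
      have r: "reach_in ?N ?E u u" by (rule reach_refl[OF u])
      have "0 < u \<and> u < m" using False u by simp
      then have "{0,u} \<in> ?E" by blast
      then have e: "{u,0} \<in> ?E" by (simp add: insert_commute)
      have z: "0 \<in> ?N" using m by simp
      show ?thesis by (rule reach_step[OF r z e])
    qed
  qed
  have conn: "\<forall>u\<in>?N. \<forall>v\<in>?N. reach_in ?N ?E u v"
  proof (intro ballI)
    fix u v assume u: "u \<in> ?N" and v: "v \<in> ?N"
    show "reach_in ?N ?E u v" by (rule reach_trans[OF c0[OF u] reach_sym[OF c0[OF v]]])
  qed
  have nc: "\<not> has_cycle ?E"
  proof
    assume "has_cycle ?E"
    then obtain xs where len: "length xs \<ge> 3" and d: "distinct xs"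
      and ed: "\<forall>i < length xs. {xs ! i, xs ! ((i + 1) mod length xs)} \<in> ?E"
      unfolding has_cycle_def by blast
    have z: "\<And>i. i < length xs \<Longrightarrow> xs ! i = 0 \<or> xs ! ((i + 1) mod length xs) = 0"
    proof -
      fix i assume "i < length xs"
      then have "{xs ! i, xs ! ((i + 1) mod length xs)} \<in> ?E" using ed by blast
      then show "xs ! i = 0 \<or> xs ! ((i + 1) mod length xs) = 0" by (auto simp: doubleton_eq_iff)
    qed
    have inj: "\<And>i j. i < length xs \<Longrightarrow> j < length xs \<Longrightarrow> xs!i = xs!j \<Longrightarrow> i = j"
      using d nth_eq_iff_index_eq by blast
    have l0: "0 < length xs" "1 < length xs" "2 < length xs" using len by linarith+
    have l1: "(1::nat) mod length xs = 1" "(2::nat) mod length xs = 2" using l0 by simp_all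
    have z0: "xs!0 = 0 \<or> xs!1 = 0" using z[of 0] l0 l1 by simp
    have z1: "xs!1 = 0 \<or> xs!2 = 0" using z[of 1] l0 l1 by (simp add: numeral_2_eq_2)
    have z2: "xs!2 = 0 \<or> xs!(3 mod length xs) = 0" using z[of 2] l0 l1 by (simp add: numeral_3_eq_3 numeral_2_eq_2)
    have m3: "3 mod length xs \<noteq> 1 \<and> 3 mod length xs \<noteq> 2 \<and> 3 mod length xs < length xs" using len
      by (cases "length xs = 3") auto
    show False
    proof (cases "xs!1 = 0")
      case True
      then have "xs!2 \<noteq> 0" using inj[of 1 2] l0 by auto
      then have "xs!(3 mod length xs) = 0" using z2 by simp
      then show False using inj[of 1 "3 mod length xs"] True m3 l0 by auto
    next
      case False
      then show False using z0 z1 inj[of 0 2] l0 by auto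
    qed
  qed
  have ed: "\<forall>e\<in>?E. \<exists>u v. e = {u, v} \<and> u \<noteq> v \<and> u \<in> ?N \<and> v \<in> ?N"
  proof
    fix e assume "e \<in> ?E"
    then obtain i where i: "e = {0,i}" "0 < i" "i < m" by blast
    then have "e = {0,i} \<and> (0::nat) \<noteq> i \<and> 0 \<in> ?N \<and> i \<in> ?N" by simp
    then show "\<exists>u v. e = {u, v} \<and> u \<noteq> v \<and> u \<in> ?N \<and> v \<in> ?N" by blast
  qed
  show ?thesis unfolding is_tree_def using conn nc m ed by auto
qed

lemma exists_dec:
  assumes "finite V" "V \<noteq> {}"
  shows "\<exists>(N::nat set) ET X. tree_cut_decomp V EG N ET X \<and> thickness N X \<le> 1"
proof -
  define m where "m = card V"
  have m: "m \<ge> 1" using assms by (simp add: m_def Suc_le_eq card_gt_0_iff)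
  obtain h where h: "bij_betw h {0..<m} V" using ex_bij_betw_nat_finite assms(1) m_def by blast
  define X where "X i = (if i < m then {h i} else {})" for i
  have "tree_cut_decomp V EG {0..<m} {{0,i} | i. 0 < i \<and> i < m} X"
    unfolding tree_cut_decomp_def
  proof (intro conjI)
    show "is_tree {0..<m} {{0, i} |i. 0 < i \<and> i < m}" using star_tree[OF m] .
    show "\<forall>s\<in>{0..<m}. \<forall>t\<in>{0..<m}. s \<noteq> t \<longrightarrow> X s \<inter> X t = {}"
      using h by (auto simp: X_def bij_betw_def inj_on_def)
    show "(\<Union>t\<in>{0..<m}. X t) = V" using h by (auto simp: X_def bij_betw_def)
  qed
  moreover have "thickness {0..<m} X \<le> 1"
    unfolding thickness_def using m by (auto simp: X_def intro!: Max.boundedI)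
  ultimately show ?thesis by blast
qed

theorem lemma3p3:
  fixes \<alpha> k :: nat
  assumes "\<alpha> \<ge> 1" and "k \<ge> 1"
  shows "ecrw \<alpha> (Gk_vertices (\<alpha> + 1) (3 * k + 3 * \<alpha> - 1))
                 (Gk_edges (\<alpha> + 1) (3 * k + 3 * \<alpha> - 1)) \<ge> k + 1"
proof -
  define n where "n = \<alpha> + 1"
  define K where "K = 3 * k + 3 * \<alpha> - 1"
  let ?S = "{crossing_number (Gk_edges n K) N ET X | (N :: nat set) ET X.
       tree_cut_decomp (Gk_vertices n K) (Gk_edges n K) N ET X \<and> thickness N X \<le> \<alpha>}"
  have "Inl 1 \<in> Gk_vertices n K" by (simp add: Gk_vertices_def n_def)
  then have ne: "?S \<noteq> {}" using exists_dec[OF finite_V, of n K "Gk_edges n K"] assms(1)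
    by fastforce
  have lb: "k + 1 \<le> x" if "x \<in> ?S" for x
  proof -
    obtain N :: "nat set" and ET X where x: "x = crossing_number (Gk_edges n K) N ET X"
      and dec: "tree_cut_decomp (Gk_vertices n K) (Gk_edges n K) N ET X" and th: "thickness N X \<le> \<alpha>"
      using \<open>x \<in> ?S\<close> by blast
    have tr: "is_tree N ET" using dec by (simp add: tree_cut_decomp_def)
    then have fN: "finite N" and tree: "\<not> has_cycle ET" and conn: "\<forall>u\<in>N. \<forall>v\<in>N. reach_in N ET u v"
      by (auto simp: is_tree_def)
    have thick: "\<forall>t\<in>N. card (X t) \<le> \<alpha>"
    proof
      fix t assume t: "t \<in> N"
      have "card (X t) \<le> Max ((\<lambda>t. card (X t)) ` N)" by (rule Max_ge) (use fN t in auto)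
      then show "card (X t) \<le> \<alpha>" using th unfolding thickness_def by linarith
    qed
    have cn: "\<And>t. t \<in> N \<Longrightarrow> cross_at (Gk_edges n K) N ET X t \<le> x"
      unfolding x crossing_number_def using fN by auto
    note df = dec_facts[OF dec]
    have "Inl 1 \<in> Gk_vertices n K" by (simp add: Gk_vertices_def n_def)
    then obtain t where tN: "t \<in> N" and t1: "Inl 1 \<in> X t" using df(1) by blast
    have "\<exists>a\<in>{1..n}. Inl a \<notin> X t"
    proof (rule ccontr)
      assume "\<not> ?thesis"
      then have sub: "Inl ` {1..n} \<subseteq> X t" by auto
      have fX: "finite (X t)" by (rule df(2)[OF tN])
      have c1: "card (Inl ` {1..n} :: (nat + (nat set \<times> nat)) set) = n"
        by (simp add: card_image)
      have "n \<le> card (X t)" using card_mono[OF fX sub] c1 by simp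
      then show False using thick tN n_def by fastforce
    qed
    then obtain a where a: "a \<in> {1..n}" "Inl a \<notin> X t" by blast
    have "Inl a \<in> Gk_vertices n K" using a by (simp add: Gk_vertices_def)
    then obtain c where cN: "c \<in> N" and ca: "Inl a \<in> X c" using df(1) by blast
    have ct: "c \<noteq> t" using a ca by auto
    obtain t' where e: "{t,t'} \<in> ET" and t'N: "t' \<in> N - {t}" and rc: "reach_in (N - {t}) ET t' c"
      using F1[OF _ ct] conn tN cN by blast
    have one: "1 \<in> {1..n}" by (simp add: n_def)
    show "k + 1 \<le> x"
    proof (cases "\<exists>q\<in>{1..n}. Inl q \<in> X t'")
      case True
      then obtain q where q: "q \<in> {1..n}" "Inl q \<in> X t'" by blast
      have "K - 2 * \<alpha> \<le> cross_at (Gk_edges n K) N ET X t + cross_at (Gk_edges n K) N ET X t'"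
        using case2[OF dec thick e _ tN _ one q(1) t1 q(2)] t'N by auto
      moreover have "cross_at (Gk_edges n K) N ET X t \<le> x" "cross_at (Gk_edges n K) N ET X t' \<le> x"
        using cn tN t'N by auto
      ultimately show ?thesis using assms unfolding K_def by linarith
    next
      case False
      then have "c \<noteq> t'" using a ca by auto
      have nr: "\<not> reach_in (N - {t'}) ET t c"
        using F2[OF tree e _ tN _ _ rc] t'N by auto
      have "K - \<alpha> \<le> cross_at (Gk_edges n K) N ET X t'"
        using case1[OF dec thick _ one a(1) _ _ t1 ca nr] t'N tN cN \<open>c \<noteq> t'\<close> by auto
      moreover have "cross_at (Gk_edges n K) N ET X t' \<le> x" using cn t'N by auto
      ultimately show ?thesis using assms unfolding K_def by linarith
    qed
  qed
  have "k + 1 \<le> Inf ?S" by (rule cInf_greatest[OF ne]) (use lb in blast)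
  then show ?thesis unfolding ecrw_def n_def K_def by simp
qed

end
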